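(* Let $1\le l\le r$ and consider a canonical noiseless MMV model $B=AX$ in which $A$ satisfies $0\le\delta^L_{2k-r+l}(A)<1$ and the nonzero rows of $X$ are in general position. Let $I\subset\{1,\dots,n\}$ satisfy $|I|\le\min(2(k-r)+l,\,k)$, $|I\setminus\operatorname{supp}X|\le k-r+l$ and $|I\cap\operatorname{supp}X|\ge k-r+1$. Then for every $j\in I$, the following are equivalent: (a) $j\in\operatorname{supp}X$; (b) $\operatorname{rank}[A_{I\setminus\{j\}}~B]=\operatorname{rank}[A_I~B]$; (c) $\mathbf a_j^{*}P^\perp_{R([A_{I\setminus\{j\}}~B])}\mathbf a_j=0$.
   Context: Canonical MMV setting: $m,n,r,k$ are positive integers with $r\le m<n$ and $r\le k$. $A\in\mathbb{R}^{m\times n}$ is the sensing matrix with columns $\mathbf a_1,\dots,\mathbf a_n$; $X\in\mathbb{R}^{n\times r}$ has rows $\mathbf x^1,\dots,\mathbf x^n$, $\operatorname{supp}X=\{i:\mathbf x^i\neq 0\}$ and $|\operatorname{supp}X|=k$; $B=AX\in\mathbb{R}^{m\times r}$ has full column rank $r$. For an index set $I$, $A_I$ is the submatrix of $A$ formed by the columns indexed by $I$, and $[A_I~B]$ denotes horizontal concatenation. $R(M)$ is the column space of $M$, $P_{R(M)}$ the orthogonal projection onto it, and $P^\perp_{R(M)}=\mathrm{Id}-P_{R(M)}$; $^*$ denotes transpose. The lower restricted isometry constant $\delta^L_s(A)$ is the smallest $\delta\ge0$ such that $(1-\delta)\|\mathbf x\|_2^2\le\|A\mathbf x\|_2^2$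 for all $\mathbf x$ with at most $s$ nonzero entries. "The nonzero rows of $X$ are in general position" means any $r$ of the $k$ nonzero rows of $X$ are linearly independent. *)

theory Defs
  imports "HOL-Analysis.Analysis"
begin

definition row_supp :: "real^'r^'n \<Rightarrow> 'n set" where
  "row_supp X = {i. row i X \<noteq> 0}"

definition lower_ric :: "nat \<Rightarrow> real^'n^'m \<Rightarrow> real" where
  "lower_ric s A = Inf {d. 0 \<le> d \<and>
      (\<forall>x::real^'n. card {i. x $ i \<noteq> 0} \<le> s \<longrightarrow> (1 - d) * (norm x)\<^sup>2 \<le> (norm (A *v x))\<^sup>2)}"

definition concat_cols :: "real^'n^'m \<Rightarrow> 'n set \<Rightarrow> real^'r^'m \<Rightarrow> (real^'m) set" where
  "concat_cols A I B = {column i A | i. i \<in> I} \<union> columns B"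

definition rank_concat :: "real^'n^'m \<Rightarrow> 'n set \<Rightarrow> real^'r^'m \<Rightarrow> nat" where
  "rank_concat A I B = dim (span (concat_cols A I B))"

definition orth_proj :: "(real^'m) set \<Rightarrow> real^'m \<Rightarrow> real^'m" where
  "orth_proj S x = (THE p. p \<in> S \<and> (\<forall>y\<in>S. orthogonal (x - p) y))"

definition orth_proj_perp :: "(real^'m) set \<Rightarrow> real^'m \<Rightarrow> real^'m" where
  "orth_proj_perp S x = x - orth_proj S x"

end

theory Submission imports Defs begin

lemma proj_zero_iff:
  fixes x :: "real^'m"
  shows "x \<bullet> orth_proj_perp (span T) x = 0 \<longleftrightarrow> x \<in> span T"
proof -
  obtain y z where y: "y \<in> span T" and z: "\<And>w. w \<in> span T \<Longrightarrow> orthogonal z w" and xyz: "x = y + z"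
    using orthogonal_subspace_decomp_exists by blast
  have "orth_proj (span T) x = y" unfolding orth_proj_def
  proof (rule the_equality)
    show "y \<in> span T \<and> (\<forall>w\<in>span T. orthogonal (x - y) w)" using y z xyz by auto
  next
    fix p assume p: "p \<in> span T \<and> (\<forall>w\<in>span T. orthogonal (x - p) w)"
    have yp: "y - p \<in> span T" using p y by (simp add: span_diff)
    have "orthogonal (x - p) (y - p)" using p yp by blast
    moreover have "orthogonal z (y - p)" using z yp by blast
    moreover have e: "y - p = (x - p) - z" using xyz by simp
    have "(y - p) \<bullet> (y - p) = (x - p) \<bullet> (y - p) - z \<bullet> (y - p)"
      by (subst (1) e) (rule inner_diff_left)
    ultimately have "orthogonal (y - p) (y - p)"
      by (simp add: orthogonal_def)
    then show "p = y" by (simp add: orthogonal_def)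
  qed
  then have pz: "orth_proj_perp (span T) x = z" unfolding orth_proj_perp_def using xyz by simp
  have yz: "y \<bullet> z = 0" using z[OF y] by (simp add: orthogonal_def inner_commute)
  have "x \<bullet> z = z \<bullet> z" using xyz yz by (simp add: inner_add_left)
  show ?thesis
  proof
    assume "x \<bullet> orth_proj_perp (span T) x = 0"
    then have "z = 0" using pz \<open>x \<bullet> z = z \<bullet> z\<close> by simp
    then show "x \<in> span T" using xyz y by simp
  next
    assume "x \<in> span T"
    then have "z \<in> span T" using xyz y by (metis add_diff_cancel_left' span_diff)
    then have "z = 0" using z[OF \<open>z \<in> span T\<close>] by (simp add: orthogonal_def)
    then show "x \<bullet> orth_proj_perp (span T) x = 0" using pz by simp
  qed
qed

lemma ric_inj:
  fixes A :: "real^'n^'m"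
  assumes "lower_ric s A < 1" "card {i. z$i \<noteq> 0} \<le> s" "A *v z = 0"
  shows "z = 0"
proof -
  let ?D = "{d. 0 \<le> d \<and>
      (\<forall>x::real^'n. card {i. x $ i \<noteq> 0} \<le> s \<longrightarrow> (1 - d) * (norm x)\<^sup>2 \<le> (norm (A *v x))\<^sup>2)}"
  have "1 \<in> ?D" by simp
  then obtain d where d: "d \<in> ?D" "d < 1" using cInf_lessD[of ?D 1] assms(1) unfolding lower_ric_def by blast
  then have "(1 - d) * (norm z)\<^sup>2 \<le> 0" using assms by auto
  then have "(norm z)\<^sup>2 \<le> 0" using d(2) by (simp add: mult_le_0_iff)
  then show ?thesis by simp
qed

lemma span_sub:
  fixes A :: "real^'n^'m" and X :: "real^'r^'n"
  shows "span (concat_cols A J (A ** X)) \<subseteq> {A *v y | y. \<forall>i. i \<notin> J \<union> row_supp X \<longrightarrow> y$i = 0}"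
proof (rule span_minimal)
  let ?V = "{A *v y | y. \<forall>i. i \<notin> J \<union> row_supp X \<longrightarrow> y$i = 0}"
  show "subspace ?V"
    unfolding subspace_def
  proof (intro conjI ballI allI)
    show "0 \<in> ?V" by (rule CollectI, rule exI[of _ 0]) simp
  next
    fix u v assume "u \<in> ?V" "v \<in> ?V"
    then obtain y1 y2 where "u = A *v y1" "\<forall>i. i \<notin> J \<union> row_supp X \<longrightarrow> y1$i = 0"
       "v = A *v y2" "\<forall>i. i \<notin> J \<union> row_supp X \<longrightarrow> y2$i = 0" by blast
    then show "u + v \<in> ?V" by (intro CollectI exI[of _ "y1+y2"]) (simp add: matrix_vector_right_distrib)
  next
    fix c :: real and u assume "u \<in> ?V"
    then obtain y1 where "u = A *v y1" "\<forall>i. i \<notin> J \<union> row_supp X \<longrightarrow> y1$i = 0" by blast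
    then show "c *\<^sub>R u \<in> ?V" by (intro CollectI exI[of _ "c *\<^sub>R y1"]) (simp add: matrix_vector_mult_scaleR)
  qed
  show "concat_cols A J (A ** X) \<subseteq> ?V"
  proof
    fix v assume "v \<in> concat_cols A J (A ** X)"
    then consider i where "i \<in> J" "v = column i A" | q where "v = column q (A ** X)"
      unfolding concat_cols_def columns_def by blast
    then show "v \<in> ?V"
    proof cases
      case 1
      have "v = A *v axis i 1" using 1 by (simp add: matrix_vector_mult_basis)
      moreover have "\<forall>i'. i' \<notin> J \<union> row_supp X \<longrightarrow> axis i 1 $ i' = (0::real)" using 1 by (auto simp: axis_def)
      ultimately show ?thesis by blast
    next
      case 2
      have "\<forall>i. i \<notin> J \<union> row_supp X \<longrightarrow> (X *v axis q 1)$i = 0"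
      proof (intro allI impI)
        fix i assume "i \<notin> J \<union> row_supp X"
        then have "row i X = 0" unfolding row_supp_def by auto
        then have "X $ i = 0" by (simp add: row_def vec_eq_iff)
        then show "(X *v axis q 1)$i = 0"
          by (simp add: matrix_vector_mul_component)
      qed
      moreover have "v = A *v (X *v axis q 1)"
        using 2 matrix_vector_mul_assoc[of A X "axis q 1"] matrix_vector_mult_basis[of "A**X" q] by simp
      ultimately show ?thesis by blast
    qed
  qed
qed

lemma row_eq: "row i X = X $ i"
  by (simp add: row_def vec_eq_iff)

lemma exists_dual:
  fixes v :: "real^'r"
  assumes "v \<notin> span W"
  shows "\<exists>c. v \<bullet> c = 1 \<and> (\<forall>w\<in>W. w \<bullet> c = 0)"
proof -
  obtain p q where p: "p \<in> span W" and q: "\<And>w. w \<in> span W \<Longrightarrow> orthogonal q w" and vpq: "v = p + q"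
    using orthogonal_subspace_decomp_exists by blast
  have qne: "q \<noteq> 0" using assms p vpq by auto
  have pq: "p \<bullet> q = 0" using q[OF p] by (simp add: orthogonal_def inner_commute)
  have vq: "v \<bullet> q = q \<bullet> q" using vpq pq by (simp add: inner_add_left)
  have qq: "q \<bullet> q \<noteq> 0" using qne by simp
  show ?thesis
  proof (intro exI[of _ "q /\<^sub>R (q \<bullet> q)"] conjI ballI)
    show "v \<bullet> (q /\<^sub>R (q \<bullet> q)) = 1" using vq qq by simp
  next
    fix w assume "w \<in> W"
    then have "q \<bullet> w = 0" using q span_base by (auto simp: orthogonal_def)
    then show "w \<bullet> (q /\<^sub>R (q \<bullet> q)) = 0" by (simp add: inner_commute)
  qed
qed

lemma mv_in_span_columns:
  fixes B :: "real^'r^'m"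
  shows "B *v c \<in> span (columns B)"
proof -
  have "B *v c = (\<Sum>q\<in>UNIV. c$q *\<^sub>R column q B)"
    by (simp add: matrix_mult_sum scalar_mult_eq_scaleR)
  also have "\<dots> \<in> span (columns B)"
    by (intro span_sum span_scale span_base) (auto simp: columns_def)
  finally show ?thesis .
qed

theorem theorem3:
  fixes A :: "real^'n^'m" and X :: "real^'r^'n" and B :: "real^'r^'m"
    and k l :: nat and I :: "'n set"
  assumes dims: "CARD('r) \<le> CARD('m)" "CARD('m) < CARD('n)"
    and kdef: "k = card (row_supp X)"
    and rk: "CARD('r) \<le> k"
    and Bdef: "B = A ** X"
    and Bfull: "rank B = CARD('r)"
    and l: "1 \<le> l" "l \<le> CARD('r)"
    and ric: "0 \<le> lower_ric (2 * k - CARD('r) + l) A" "lower_ric (2 * k - CARD('r) + l) A < 1"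
    and genpos: "\<forall>S. S \<subseteq> row_supp X \<and> card S = CARD('r) \<longrightarrow>
                    inj_on (\<lambda>i. row i X) S \<and> independent ((\<lambda>i. row i X) ` S)"
    and I1: "card I \<le> min (2 * (k - CARD('r)) + l) k"
    and I2: "card (I - row_supp X) \<le> k - CARD('r) + l"
    and I3: "card (I \<inter> row_supp X) \<ge> k - CARD('r) + 1"
    and j: "j \<in> I"
  shows "(j \<in> row_supp X \<longleftrightarrow> rank_concat A (I - {j}) B = rank_concat A I B)
       \<and> (rank_concat A (I - {j}) B = rank_concat A I B \<longleftrightarrow>
            column j A \<bullet> orth_proj_perp (span (concat_cols A (I - {j}) B)) (column j A) = 0)"
proof -
  define S where "S = row_supp X"
  define r where "r = CARD('r)"
  define C where "C = concat_cols A (I - {j}) B"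
  have finS: "finite S" by simp
  have finI: "finite I" by simp
  have cc: "concat_cols A I B = insert (column j A) C"
    using j unfolding C_def concat_cols_def by auto
  have rank_iff: "rank_concat A (I - {j}) B = rank_concat A I B \<longleftrightarrow> column j A \<in> span C"
    unfolding rank_concat_def cc C_def[symmetric] by (simp add: dim_span dim_insert)
  have key: "j \<in> S \<longleftrightarrow> column j A \<in> span C"
  proof
    assume jS: "j \<in> S"
    have "card (S - I) = card S - card (S \<inter> I)" by (simp add: card_Diff_subset_Int)
    moreover have "card (S \<inter> I) \<ge> k - r + 1" using I3 unfolding S_def r_def by (simp add: Int_commute)
    ultimately have cSI: "card (S - I) \<le> r - 1" using kdef rk unfolding S_def r_def by linarith
    have r1: "r \<ge> 1" unfolding r_def by simp
    have cU: "card (insert j (S - I)) \<le> r"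
      using cSI r1 by (simp add: card_insert_if) linarith
    have US: "insert j (S - I) \<subseteq> S" using jS by auto
    have "r \<le> card S" using rk kdef unfolding S_def r_def by simp
    then obtain S' where S': "insert j (S - I) \<subseteq> S'" "S' \<subseteq> S" "card S' = r"
      using exists_subset_between[OF cU _ US finS] by blast
    have inj: "inj_on (\<lambda>i. row i X) S'" and ind: "independent ((\<lambda>i. row i X) ` S')"
      using genpos S' unfolding S_def r_def by auto
    have "row j X \<notin> span ((\<lambda>i. row i X) ` S' - {row j X})"
      using ind S'(1) unfolding dependent_def by auto
    moreover have "(\<lambda>i. row i X) ` (S' - {j}) = (\<lambda>i. row i X) ` S' - {row j X}"
      using inj S'(1) by (auto simp: inj_on_def)
    ultimately have "row j X \<notin> span ((\<lambda>i. row i X) ` (S' - {j}))" by simp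
    then obtain c where c1: "row j X \<bullet> c = 1" and c0: "\<forall>w\<in>(\<lambda>i. row i X) ` (S' - {j}). w \<bullet> c = 0"
      using exists_dual by blast
    define f where "f i = (row i X \<bullet> c) *\<^sub>R column i A" for i
    have Bc: "B *v c = (\<Sum>i\<in>UNIV. f i)"
    proof -
      have "B *v c = A *v (X *v c)" unfolding Bdef by (simp add: matrix_vector_mul_assoc)
      also have "\<dots> = (\<Sum>i\<in>UNIV. (X *v c)$i *\<^sub>R column i A)"
        by (simp only: matrix_mult_sum scalar_mult_eq_scaleR)
      also have "\<dots> = (\<Sum>i\<in>UNIV. f i)"
        unfolding f_def by (simp only: matrix_vector_mul_component row_eq)
      finally show ?thesis .
    qed
    have fz: "f i = 0" if "i \<notin> S \<inter> I" for i
    proof (cases "i \<in> S")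
      case True
      then have "i \<in> S' - {j}" using that S'(1) j by auto
      then show ?thesis using c0 unfolding f_def by auto
    next
      case False
      then have "row i X = 0" unfolding S_def row_supp_def by auto
      then show ?thesis unfolding f_def by simp
    qed
    have "(\<Sum>i\<in>UNIV. f i) = (\<Sum>i\<in>S \<inter> I. f i)"
      by (rule sum.mono_neutral_right) (auto intro: fz)
    also have "\<dots> = f j + (\<Sum>i\<in>(S \<inter> I) - {j}. f i)"
      using jS j by (simp add: sum.remove)
    finally have "column j A = B *v c - (\<Sum>i\<in>(S \<inter> I) - {j}. f i)"
      using Bc c1 unfolding f_def by simp
    also have "\<dots> \<in> span C"
    proof (rule span_diff)
      show "B *v c \<in> span C"
        using mv_in_span_columns[of B c] span_mono[of "columns B" C] unfolding C_def concat_cols_def by blast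
      show "(\<Sum>i\<in>(S \<inter> I) - {j}. f i) \<in> span C"
        unfolding f_def by (intro span_sum span_scale span_base) (auto simp: C_def concat_cols_def)
    qed
    finally show "column j A \<in> span C" .
  next
    assume inC: "column j A \<in> span C"
    show "j \<in> S"
    proof (rule ccontr)
      assume jS: "j \<notin> S"
      from inC span_sub[of A "I - {j}" X] obtain y where
        y: "column j A = A *v y" "\<forall>i. i \<notin> (I - {j}) \<union> S \<longrightarrow> y$i = 0"
        unfolding C_def Bdef S_def by blast
      define z where "z = axis j (1::real) - y"
      have Az: "A *v z = 0"
        unfolding z_def using y(1) by (simp add: matrix_vector_mult_diff_distrib matrix_vector_mult_basis)
      have zj: "z $ j = 1" unfolding z_def using y(2) jS by (simp add: axis_def)
      have supp: "{i. z$i \<noteq> 0} \<subseteq> I \<union> S"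
        unfolding z_def using y(2) j by (auto simp: axis_def)
      have "I \<union> S = (I - S) \<union> S" by auto
      then have "card (I \<union> S) = card (I - S) + card S"
        using card_Un_disjoint[of "I - S" S] by (metis Diff_disjoint Int_commute finite finite_Un)
      then have "card (I \<union> S) \<le> 2 * k - CARD('r) + l" using I2 kdef rk unfolding S_def by linarith
      moreover have "card {i. z$i \<noteq> 0} \<le> card (I \<union> S)" by (rule card_mono) (use supp in auto)
      ultimately have "card {i. z$i \<noteq> 0} \<le> 2 * k - CARD('r) + l" by linarith
      then have "z = 0" using ric_inj[OF ric(2) _ Az] by blast
      then show False using zj by simp
    qed
  qed
  show ?thesis
    using key rank_iff proj_zero_iff[of "column j A" C] unfolding S_def C_def by blast
qed

end
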